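(* Let $\widetilde{\mathsf{Op}}$ be the GPT associated with an operational theory. Then $\widetilde{\mathsf{Op}}$ is tomographically local if and only if, for every system $A$, every linearly independent spanning set of states $\{\widetilde P^A_j\}_{j=1}^{m^A}$ and every linearly independent spanning set of effects $\{\widetilde E^A_i\}_{i=1}^{m^A}$, the $m^A\times m^A$ matrix $\mathbf{N}_{\widetilde{\mathbb 1}_A}$ with entries $(\mathbf{N}_{\widetilde{\mathbb 1}_A})_{j,i}:=\widetilde E^A_j\circ\widetilde P^A_i$ is invertible and, writing $\mathbf{M}_{\widetilde{\mathbb 1}_A}:=\mathbf{N}_{\widetilde{\mathbb 1}_A}^{-1}$, the identity process on $A$ decomposes as $$\widetilde{\mathbb 1}_A=\sum_{i,j=1}^{m^A}(\mathbf{M}_{\widetilde{\mathbb 1}_A})_{j,i}\;\widetilde P^A_j\circ\widetilde E^A_i .$$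
   Context: A process theory consists of systems (closed under composition $\otimes$, with trivial system $I$) and processes, closed under sequential composition $\circ$ and parallel composition $\otimes$, with identities; processes $I\to A$ are states, $A\to I$ effects. An operational theory is a process theory of procedures with a probability rule $p$ assigning each closed diagram a value in $[0,1]$; two procedures of the same type are operationally equivalent if they yield equal probabilities when plugged into any tester $\tau=(s,e,W)$ ($s:I\to A\otimes W$, $e:B\otimes W\to I$, yielding $e\circ(T\otimes\mathrm{id}_W)\circ s$); finitely many testers suffice for each type. The associated GPT $\widetilde{\mathsf{Op}}$ has as processes the equivalence classes, composed via representatives; closed diagrams are real numbers (probabilities); each class of type $A\to B$ is identified with its vector of probabilities on a finite tomographically complete set of testers, so linear combinations of processes of a given type are elements of a finite-dimensional real vector space, and sequential and parallel composition extend bilinearly to these linear combinations. For a system $A$, the states of $A$ span a finite-dimensional vector space of dimension $m^A$ and the effects on $A$ span a space of the same dimension; a "linearly independent spanning set" of states (effects) is a basis of this span consisting of states (effects). For an effect $E$ on $A$ and a state $P$ of $B$, $P\circ E$ denotes the process $A\to B$ obtained by sequential composition through the trivial system. $\widetilde{\mathsf{Op}}$ is tomographically local if any two processes of the same type (possibly with several input systems $A_1,\dots$ and output systems $B_1,\dots$) that give equal probabilities when composed with all products of states on their inputs and all products of effects on their outputs are equal. *)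

theory Defs
  imports Main "Jordan_Normal_Form.Matrix"
begin

text \<open>Systems have type 's, procedures type 'p.  seqc g f is the sequential
composition "g after f" (g o f), defined when cod f = dom g; parc is the
parallel composition; idp A the identity on A; unitS the trivial system I;
prob assigns a probability to every closed diagram (procedure I -> I).\<close>

record ('s, 'p) optheory =
  unitS :: 's
  tensS :: "'s \<Rightarrow> 's \<Rightarrow> 's"
  dom   :: "'p \<Rightarrow> 's"
  cod   :: "'p \<Rightarrow> 's"
  seqc  :: "'p \<Rightarrow> 'p \<Rightarrow> 'p"
  parc  :: "'p \<Rightarrow> 'p \<Rightarrow> 'p"
  idp   :: "'s \<Rightarrow> 'p"
  prob  :: "'p \<Rightarrow> real"

definition hom :: "('s, 'p) optheory \<Rightarrow> 's \<Rightarrow> 's \<Rightarrow> 'p set" where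
  "hom Th A B = {T. dom Th T = A \<and> cod Th T = B}"

definition process_theory :: "('s, 'p) optheory \<Rightarrow> bool" where
  "process_theory Th \<longleftrightarrow>
     (\<forall>f g. cod Th f = dom Th g \<longrightarrow>
        dom Th (seqc Th g f) = dom Th f \<and> cod Th (seqc Th g f) = cod Th g) \<and>
     (\<forall>f g. dom Th (parc Th f g) = tensS Th (dom Th f) (dom Th g) \<and>
            cod Th (parc Th f g) = tensS Th (cod Th f) (cod Th g)) \<and>
     (\<forall>A. dom Th (idp Th A) = A \<and> cod Th (idp Th A) = A) \<and>
     (\<forall>f g h. cod Th f = dom Th g \<longrightarrow> cod Th g = dom Th h \<longrightarrow>
        seqc Th h (seqc Th g f) = seqc Th (seqc Th h g) f) \<and>
     (\<forall>f. seqc Th (idp Th (cod Th f)) f = f \<and> seqc Th f (idp Th (dom Th f)) = f) \<and>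
     (\<forall>A B C. tensS Th A (tensS Th B C) = tensS Th (tensS Th A B) C) \<and>
     (\<forall>A. tensS Th (unitS Th) A = A \<and> tensS Th A (unitS Th) = A) \<and>
     (\<forall>f g h. parc Th f (parc Th g h) = parc Th (parc Th f g) h) \<and>
     (\<forall>f. parc Th (idp Th (unitS Th)) f = f \<and> parc Th f (idp Th (unitS Th)) = f) \<and>
     (\<forall>f g f' g'. cod Th f = dom Th g \<longrightarrow> cod Th f' = dom Th g' \<longrightarrow>
        parc Th (seqc Th g f) (seqc Th g' f') = seqc Th (parc Th g g') (parc Th f f')) \<and>
     (\<forall>A B. idp Th (tensS Th A B) = parc Th (idp Th A) (idp Th B))"

definition testers :: "('s, 'p) optheory \<Rightarrow> 's \<Rightarrow> 's \<Rightarrow> ('p \<times> 'p \<times> 's) set" where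
  "testers Th A B = {(s, e, W). s \<in> hom Th (unitS Th) (tensS Th A W) \<and>
                               e \<in> hom Th (tensS Th B W) (unitS Th)}"

definition tpr :: "('s, 'p) optheory \<Rightarrow> ('p \<times> 'p \<times> 's) \<Rightarrow> 'p \<Rightarrow> real" where
  "tpr Th \<tau> T = (case \<tau> of (s, e, W) \<Rightarrow>
      prob Th (seqc Th e (seqc Th (parc Th T (idp Th W)) s)))"

text \<open>Formal (finite) real linear combinations of procedures; they denote
elements of the GPT's vector spaces via their tester-probability vectors.\<close>
type_synonym 'p lincomb = "(real \<times> 'p) list"

definition lc_ok :: "('s, 'p) optheory \<Rightarrow> 's \<Rightarrow> 's \<Rightarrow> 'p lincomb \<Rightarrow> bool" where
  "lc_ok Th A B L \<longleftrightarrow> (\<forall>(c, T) \<in> set L. T \<in> hom Th A B)"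

definition lc_val :: "('p \<Rightarrow> real) \<Rightarrow> 'p lincomb \<Rightarrow> real" where
  "lc_val f L = sum_list (map (\<lambda>(c, T). c * f T) L)"

text \<open>Equality in the GPT of two linear combinations of type A -> B:
equal probabilities on every tester (operational equivalence).\<close>
definition gpt_eq :: "('s, 'p) optheory \<Rightarrow> 's \<Rightarrow> 's \<Rightarrow> 'p lincomb \<Rightarrow> 'p lincomb \<Rightarrow> bool" where
  "gpt_eq Th A B L L' \<longleftrightarrow> (\<forall>\<tau> \<in> testers Th A B. lc_val (tpr Th \<tau>) L = lc_val (tpr Th \<tau>) L')"

definition operational_theory :: "('s, 'p) optheory \<Rightarrow> bool" where
  "operational_theory Th \<longleftrightarrow>
     process_theory Th \<and>
     (\<forall>f \<in> hom Th (unitS Th) (unitS Th). 0 \<le> prob Th f \<and> prob Th f \<le> 1) \<and>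
     (\<forall>f \<in> hom Th (unitS Th) (unitS Th). \<forall>g \<in> hom Th (unitS Th) (unitS Th).
        prob Th (parc Th f g) = prob Th f * prob Th g) \<and>
     (\<forall>A B. \<exists>F. finite F \<and> F \<subseteq> testers Th A B \<and>
        (\<forall>L. lc_ok Th A B L \<longrightarrow> (\<forall>\<tau> \<in> F. lc_val (tpr Th \<tau>) L = 0) \<longrightarrow>
             gpt_eq Th A B L []))"

definition tensL :: "('s, 'p) optheory \<Rightarrow> 's list \<Rightarrow> 's" where
  "tensL Th As = foldr (tensS Th) As (unitS Th)"

definition parL :: "('s, 'p) optheory \<Rightarrow> 'p list \<Rightarrow> 'p" where
  "parL Th Ts = foldr (parc Th) Ts (idp Th (unitS Th))"

definition tomographically_local :: "('s, 'p) optheory \<Rightarrow> bool" where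
  "tomographically_local Th \<longleftrightarrow>
     (\<forall>As Bs L L'. lc_ok Th (tensL Th As) (tensL Th Bs) L \<longrightarrow> lc_ok Th (tensL Th As) (tensL Th Bs) L' \<longrightarrow>
        (\<forall>Ps Es. length Ps = length As \<longrightarrow> (\<forall>k < length As. Ps ! k \<in> hom Th (unitS Th) (As ! k)) \<longrightarrow>
                 length Es = length Bs \<longrightarrow> (\<forall>k < length Bs. Es ! k \<in> hom Th (Bs ! k) (unitS Th)) \<longrightarrow>
            lc_val (\<lambda>T. prob Th (seqc Th (parL Th Es) (seqc Th T (parL Th Ps)))) L =
            lc_val (\<lambda>T. prob Th (seqc Th (parL Th Es) (seqc Th T (parL Th Ps)))) L') \<longrightarrow>
        gpt_eq Th (tensL Th As) (tensL Th Bs) L L')"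

definition lin_indep_spanning :: "('s, 'p) optheory \<Rightarrow> 's \<Rightarrow> 's \<Rightarrow> nat \<Rightarrow> (nat \<Rightarrow> 'p) \<Rightarrow> bool" where
  "lin_indep_spanning Th A B m Ps \<longleftrightarrow>
     (\<forall>j < m. Ps j \<in> hom Th A B) \<and>
     (\<forall>c. gpt_eq Th A B (map (\<lambda>j. (c j, Ps j)) [0..<m]) [] \<longrightarrow> (\<forall>j < m. c j = 0)) \<and>
     (\<forall>P \<in> hom Th A B. \<exists>c. gpt_eq Th A B [(1, P)] (map (\<lambda>j. (c j, Ps j)) [0..<m]))"

definition lin_indep_spanning_states where
  "lin_indep_spanning_states Th A m Ps = lin_indep_spanning Th (unitS Th) A m Ps"

definition lin_indep_spanning_effects where
  "lin_indep_spanning_effects Th A m Es = lin_indep_spanning Th A (unitS Th) m Es"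

definition Nmat :: "('s, 'p) optheory \<Rightarrow> nat \<Rightarrow> (nat \<Rightarrow> 'p) \<Rightarrow> (nat \<Rightarrow> 'p) \<Rightarrow> real mat" where
  "Nmat Th m Ps Es = mat m m (\<lambda>(j, i). prob Th (seqc Th (Es j) (Ps i)))"

definition id_expansion :: "('s, 'p) optheory \<Rightarrow> nat \<Rightarrow> real mat \<Rightarrow> (nat \<Rightarrow> 'p) \<Rightarrow> (nat \<Rightarrow> 'p) \<Rightarrow> 'p lincomb" where
  "id_expansion Th m M Ps Es =
     concat (map (\<lambda>j. map (\<lambda>i. (M $$ (j, i), seqc Th (Ps j) (Es i))) [0..<m]) [0..<m])"

end

theory Submission
  imports Defs "Jordan_Normal_Form.Determinant"
begin


lemma mv_entry: "j < n \<Longrightarrow> (mat n n (\<lambda>(j, i). f j i) *\<^sub>v vec n x) $ j = (\<Sum>i<n. f j i * x i)"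
  by (simp add: scalar_prod_def row_def atLeast0LessThan)

lemma KER:
  fixes f :: "nat \<Rightarrow> nat \<Rightarrow> real"
  assumes d: "det (mat n n (\<lambda>(j, i). f j i)) \<noteq> 0"
    and h: "\<forall>j<n. (\<Sum>i<n. f j i * x i) = 0" and i: "i < n"
  shows "x i = 0"
proof -
  let ?A = "mat n n (\<lambda>(j, i). f j i)"
  have A: "?A \<in> carrier_mat n n" by simp
  have "?A *\<^sub>v vec n x = 0\<^sub>v n"
  proof (rule eq_vecI)
    fix j assume "j < dim_vec (0\<^sub>v n :: real vec)"
    hence j: "j < n" by simp
    show "(?A *\<^sub>v vec n x) $ j = (0\<^sub>v n :: real vec) $ j"
      by (subst mv_entry[OF j]) (use h j in simp)
  qed simp
  hence "vec n x = 0\<^sub>v n" using det_0_iff_vec_prod_zero[OF A] d vec_carrier by blast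
  hence "vec n x $ i = 0" using i by simp
  thus ?thesis using i by simp
qed

lemma KER2:
  fixes f :: "nat \<Rightarrow> nat \<Rightarrow> real"
  assumes h: "\<And>x. \<forall>j<n. (\<Sum>i<n. f j i * x i) = 0 \<Longrightarrow> \<forall>i<n. x i = 0"
  shows "det (mat n n (\<lambda>(j, i). f j i)) \<noteq> 0"
proof
  let ?A = "mat n n (\<lambda>(j, i). f j i)"
  have A: "?A \<in> carrier_mat n n" by simp
  assume "det ?A = 0"
  then obtain v where v: "v \<in> carrier_vec n" "v \<noteq> 0\<^sub>v n" "?A *\<^sub>v v = 0\<^sub>v n"
    using det_0_iff_vec_prod_zero[OF A] by auto
  have vv: "v = vec n (\<lambda>i. v $ i)" using v(1) by auto
  have "\<forall>j<n. (\<Sum>i<n. f j i * v $ i) = 0"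
  proof (intro allI impI)
    fix j assume j: "j < n"
    have "(?A *\<^sub>v vec n (\<lambda>i. v $ i)) $ j = 0" using v(3) vv j by simp
    thus "(\<Sum>i<n. f j i * v $ i) = 0" using mv_entry[OF j, of f "\<lambda>i. v $ i"] by simp
  qed
  hence "\<forall>i<n. v $ i = 0" using h by blast
  hence "v = 0\<^sub>v n" using v(1) by (intro eq_vecI) auto
  thus False using v(2) by simp
qed

lemma INV:
  fixes A :: "real mat"
  assumes A: "A \<in> carrier_mat n n" and d: "det A \<noteq> 0"
  shows "\<exists>B \<in> carrier_mat n n. A * B = 1\<^sub>m n \<and> B * A = 1\<^sub>m n"
  using det_non_zero_imp_unit[OF A d, of "()"] unfolding Units_def ring_mat_def by auto

lemma SOLVE:
  fixes f :: "nat \<Rightarrow> nat \<Rightarrow> real"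
  assumes d: "det (mat n n (\<lambda>(j, i). f j i)) \<noteq> 0"
  shows "\<exists>x. \<forall>j<n. (\<Sum>i<n. f j i * x i) = a j"
proof -
  let ?A = "mat n n (\<lambda>(j, i). f j i)"
  have A: "?A \<in> carrier_mat n n" by simp
  obtain B where B: "B \<in> carrier_mat n n" "?A * B = 1\<^sub>m n" using INV[OF A d] by auto
  let ?y = "B *\<^sub>v vec n a"
  have "?A *\<^sub>v ?y = (?A * B) *\<^sub>v vec n a" using B(1)
    by (subst assoc_mult_mat_vec[symmetric]) auto
  also have "\<dots> = vec n a" using B(2) by simp
  finally have eq: "?A *\<^sub>v ?y = vec n a" .
  have yy: "?y = vec n (\<lambda>i. ?y $ i)" using B(1) by auto
  show ?thesis
  proof (intro exI allI impI)
    fix j assume j: "j < n"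
    have "(?A *\<^sub>v vec n (\<lambda>i. ?y $ i)) $ j = a j" using eq yy j by (metis index_vec)
    thus "(\<Sum>i<n. f j i * ?y $ i) = a j" using mv_entry[OF j, of f "\<lambda>i. ?y $ i"] by simp
  qed
qed

lemma DET_T:
  "det (mat n n (\<lambda>(j, i). f i j)) = det (mat n n (\<lambda>(j, i). f j i))"
proof -
  have "mat n n (\<lambda>(j, i). f i j) = transpose_mat (mat n n (\<lambda>(j, i). f j i))"
    by (rule eq_matI) auto
  thus ?thesis using det_transpose[of "mat n n (\<lambda>(j, i). f j i)" n] by simp
qed



lemma KER3:
  fixes f :: "nat \<Rightarrow> nat \<Rightarrow> real"
  assumes d: "det (mat n n (\<lambda>(j, i). f j i)) = 0"
  shows "\<exists>x. (\<forall>j<n. (\<Sum>i<n. f j i * x i) = 0) \<and> (\<exists>i<n. x i \<noteq> 0)"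
  using KER2[of n f] d by blast

lemma ZROW:
  fixes f :: "nat \<Rightarrow> nat \<Rightarrow> real"
  assumes k: "k < n" and z: "\<forall>i<n. f k i = 0"
  shows "det (mat n n (\<lambda>(j, i). f j i)) = 0"
proof -
  let ?A = "mat n n (\<lambda>(j, i). f j i)"
  have "mat\<^sub>r n n (\<lambda>r. if r = k then 0\<^sub>v n else row ?A r) = ?A"
    by (rule eq_matI) (use z in auto)
  moreover have "det (mat\<^sub>r n n (\<lambda>r. if r = k then 0\<^sub>v n else row ?A r)) = 0"
    by (rule det_row_0[OF k]) auto
  ultimately show ?thesis by simp
qed

lemma EXT:
  fixes f :: "nat \<Rightarrow> nat \<Rightarrow> real"
  assumes d: "det (mat m m (\<lambda>(j, i). f j i)) \<noteq> 0"
    and x: "\<forall>j<m. (\<Sum>i<m. f j i * x i) = f j m"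
    and ne: "f m m \<noteq> (\<Sum>i<m. f m i * x i)"
  shows "det (mat (Suc m) (Suc m) (\<lambda>(j, i). f j i)) \<noteq> 0"
proof (rule KER2)
  fix v assume h: "\<forall>j<Suc m. (\<Sum>i<Suc m. f j i * v i) = 0"
  define t where "t = v m"
  have h1: "\<forall>j<m. (\<Sum>i<m. f j i * (v i + t * x i)) = 0"
  proof (intro allI impI)
    fix j assume j: "j < m"
    have "(\<Sum>i<m. f j i * (v i + t * x i)) = (\<Sum>i<m. f j i * v i) + t * (\<Sum>i<m. f j i * x i)"
      by (simp add: algebra_simps sum.distrib sum_distrib_left)
    also have "\<dots> = (\<Sum>i<Suc m. f j i * v i)" using x j by (simp add: t_def)
    also have "\<dots> = 0" using h j by simp
    finally show "(\<Sum>i<m. f j i * (v i + t * x i)) = 0" .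
  qed
  have h2: "\<forall>i<m. v i + t * x i = 0"
    using KER[OF d h1] by blast
  have "0 = (\<Sum>i<Suc m. f m i * v i)" using h by simp
  also have "\<dots> = (\<Sum>i<m. f m i * v i) + f m m * t" by (simp add: t_def)
  also have "(\<Sum>i<m. f m i * v i) = (\<Sum>i<m. f m i * (- t * x i))"
  proof (intro sum.cong refl)
    fix i assume "i \<in> {..<m}"
    hence "v i + t * x i = 0" using h2 by simp
    hence "v i = - t * x i" by linarith
    thus "f m i * v i = f m i * (- t * x i)" by simp
  qed
  finally have "t * (f m m - (\<Sum>i<m. f m i * x i)) = 0"
    by (simp add: algebra_simps sum_distrib_left sum_negf)
  hence t0: "t = 0" using ne by simp
  show "\<forall>i<Suc m. v i = 0"
    using h2 t0 by (auto simp: t_def less_Suc_eq)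
qed


lemma ALG:
  fixes n mm :: "nat \<Rightarrow> nat \<Rightarrow> real"
  assumes id: "\<And>l i. l < m \<Longrightarrow> i < m \<Longrightarrow> (\<Sum>j<m. n l j * mm j i) = (if l = i then 1 else 0)"
  shows "(\<Sum>j<m. \<Sum>i<m. mm j i * (\<Sum>l<m. a l * n l j) * (\<Sum>k<m. b k * n i k)) =
         (\<Sum>l<m. a l * (\<Sum>k<m. b k * n l k))"
proof -
  define S where "S = (\<lambda>i. \<Sum>k<m. b k * n i k)"
  define F where "F = (\<lambda>j i l. a l * S i * (n l j * mm j i))"
  have "(\<Sum>j<m. \<Sum>i<m. mm j i * (\<Sum>l<m. a l * n l j) * S i) = (\<Sum>j<m. \<Sum>i<m. \<Sum>l<m. F j i l)"
  proof (intro sum.cong refl)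
    fix j i
    have "mm j i * (\<Sum>l<m. a l * n l j) * S i = (\<Sum>l<m. mm j i * (a l * n l j) * S i)"
      by (simp add: sum_distrib_left sum_distrib_right)
    also have "\<dots> = (\<Sum>l<m. F j i l)" unfolding F_def by (intro sum.cong refl) (simp only: mult_ac)
    finally show "mm j i * (\<Sum>l<m. a l * n l j) * S i = (\<Sum>l<m. F j i l)" .
  qed
  also have "\<dots> = (\<Sum>i<m. \<Sum>j<m. \<Sum>l<m. F j i l)" by (rule sum.swap)
  also have "\<dots> = (\<Sum>i<m. \<Sum>l<m. \<Sum>j<m. F j i l)" by (rule sum.cong[OF refl], rule sum.swap)
  also have "\<dots> = (\<Sum>i<m. \<Sum>l<m. (if i = l then a l * S i else 0))"
  proof (intro sum.cong refl)
    fix i l assume i: "i \<in> {..<m}" and l: "l \<in> {..<m}"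
    have "(\<Sum>j<m. F j i l) = a l * S i * (\<Sum>j<m. n l j * mm j i)"
      unfolding F_def by (simp only: sum_distrib_left)
    also have "\<dots> = (if i = l then a l * S i else 0)" using id i l by auto
    finally show "(\<Sum>j<m. F j i l) = (if i = l then a l * S i else 0)" .
  qed
  also have "\<dots> = (\<Sum>l<m. \<Sum>i<m. (if i = l then a l * S i else 0))" by (rule sum.swap)
  also have "\<dots> = (\<Sum>l<m. a l * S l)" by (intro sum.cong refl) (simp add: sum.delta)
  finally show ?thesis unfolding S_def .
qed

locale OT = fixes Th :: "('s, 'p) optheory"
  assumes ot: "operational_theory Th"
begin

lemma pt: "process_theory Th" using ot unfolding operational_theory_def by auto

lemma hom_iff[simp]: "T \<in> hom Th A B \<longleftrightarrow> optheory.dom Th T = A \<and> cod Th T = B"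
  unfolding hom_def by auto

lemma seq_dom[simp]: "cod Th f = optheory.dom Th g \<Longrightarrow> optheory.dom Th (seqc Th g f) = optheory.dom Th f"
  using pt unfolding process_theory_def by simp
lemma seq_cod[simp]: "cod Th f = optheory.dom Th g \<Longrightarrow> cod Th (seqc Th g f) = cod Th g"
  using pt unfolding process_theory_def by simp
lemma par_dom[simp]: "optheory.dom Th (parc Th f g) = tensS Th (optheory.dom Th f) (optheory.dom Th g)"
  using pt unfolding process_theory_def by simp
lemma par_cod[simp]: "cod Th (parc Th f g) = tensS Th (cod Th f) (cod Th g)"
  using pt unfolding process_theory_def by simp
lemma id_dom[simp]: "optheory.dom Th (idp Th A) = A"
  using pt unfolding process_theory_def by simp
lemma id_cod[simp]: "cod Th (idp Th A) = A"
  using pt unfolding process_theory_def by simp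
lemma sassoc: "cod Th f = optheory.dom Th g \<Longrightarrow> cod Th g = optheory.dom Th h \<Longrightarrow>
   seqc Th h (seqc Th g f) = seqc Th (seqc Th h g) f"
  using pt unfolding process_theory_def by simp
lemma idl[simp]: "cod Th f = B \<Longrightarrow> seqc Th (idp Th B) f = f"
  using pt unfolding process_theory_def by blast
lemma idr[simp]: "optheory.dom Th f = A \<Longrightarrow> seqc Th f (idp Th A) = f"
  using pt unfolding process_theory_def by blast
lemma tassoc: "tensS Th A (tensS Th B C) = tensS Th (tensS Th A B) C"
  using pt unfolding process_theory_def by simp
lemma tunit[simp]: "tensS Th (unitS Th) A = A" "tensS Th A (unitS Th) = A"
  using pt unfolding process_theory_def by simp_all
lemma passoc: "parc Th f (parc Th g h) = parc Th (parc Th f g) h"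
  using pt unfolding process_theory_def by simp
lemma punit[simp]: "parc Th (idp Th (unitS Th)) f = f" "parc Th f (idp Th (unitS Th)) = f"
  using pt unfolding process_theory_def by simp_all
lemma interchange: "cod Th f = optheory.dom Th g \<Longrightarrow> cod Th f' = optheory.dom Th g' \<Longrightarrow>
   parc Th (seqc Th g f) (seqc Th g' f') = seqc Th (parc Th g g') (parc Th f f')"
  using pt unfolding process_theory_def by simp
lemma id_tens: "idp Th (tensS Th A B) = parc Th (idp Th A) (idp Th B)"
  using pt unfolding process_theory_def by simp

lemma slide1: "parc Th f g = seqc Th (parc Th f (idp Th (cod Th g))) (parc Th (idp Th (optheory.dom Th f)) g)"
  using interchange[of "idp Th (optheory.dom Th f)" f g "idp Th (cod Th g)"] by simp
lemma slide2: "parc Th f g = seqc Th (parc Th (idp Th (cod Th f)) g) (parc Th f (idp Th (optheory.dom Th g)))"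
  using interchange[of f "idp Th (cod Th f)" "idp Th (optheory.dom Th g)" g] by simp

lemma scalar_seq: "cod Th f = unitS Th \<Longrightarrow> optheory.dom Th g = unitS Th \<Longrightarrow> seqc Th g f = parc Th g f"
  using slide1[of g f] by simp

lemma prob_mult: "f \<in> hom Th (unitS Th) (unitS Th) \<Longrightarrow> g \<in> hom Th (unitS Th) (unitS Th) \<Longrightarrow>
   prob Th (seqc Th g f) = prob Th g * prob Th f"
  using ot scalar_seq[of f g] unfolding operational_theory_def by simp

lemma lc_val_Nil[simp]: "lc_val f [] = 0" by (simp add: lc_val_def)
lemma lc_val_Cons[simp]: "lc_val f ((c, T) # L) = c * f T + lc_val f L" by (simp add: lc_val_def)
lemma lc_val_append[simp]: "lc_val f (L1 @ L2) = lc_val f L1 + lc_val f L2" by (simp add: lc_val_def)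
lemma lc_val_upt: "lc_val f (map (\<lambda>j. (c j, P j)) [0..<m]) = (\<Sum>j<m. c j * f (P j))"
  by (induction m) (simp_all add: lc_val_def)

lemma TS:
  assumes "\<tau> \<in> testers Th (unitS Th) A"
  shows "\<exists>E. E \<in> hom Th A (unitS Th) \<and> (\<forall>P. P \<in> hom Th (unitS Th) A \<longrightarrow> tpr Th \<tau> P = prob Th (seqc Th E P))"
proof -
  obtain s e W where t: "\<tau> = (s, e, W)" and s: "s \<in> hom Th (unitS Th) W"
    and e: "e \<in> hom Th (tensS Th A W) (unitS Th)"
    using assms unfolding testers_def by auto
  show ?thesis
  proof (intro exI conjI allI impI)
    show "seqc Th e (parc Th (idp Th A) s) \<in> hom Th A (unitS Th)" using s e by simp
    fix P assume P: "P \<in> hom Th (unitS Th) A"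
    have 1: "seqc Th (parc Th P (idp Th W)) s = parc Th P s" using slide1[of P s] s P by simp
    have 2: "parc Th P s = seqc Th (parc Th (idp Th A) s) P" using slide2[of P s] s P by simp
    show "tpr Th \<tau> P = prob Th (seqc Th (seqc Th e (parc Th (idp Th A) s)) P)"
      unfolding t tpr_def using 1 2 s e P by (simp add: sassoc)
  qed
qed

lemma TE:
  assumes "\<tau> \<in> testers Th A (unitS Th)"
  shows "\<exists>P. P \<in> hom Th (unitS Th) A \<and> (\<forall>E. E \<in> hom Th A (unitS Th) \<longrightarrow> tpr Th \<tau> E = prob Th (seqc Th E P))"
proof -
  obtain s e W where t: "\<tau> = (s, e, W)" and s: "s \<in> hom Th (unitS Th) (tensS Th A W)"
    and e: "e \<in> hom Th W (unitS Th)"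
    using assms unfolding testers_def by auto
  show ?thesis
  proof (intro exI conjI allI impI)
    show "seqc Th (parc Th (idp Th A) e) s \<in> hom Th (unitS Th) A" using s e by simp
    fix E assume E: "E \<in> hom Th A (unitS Th)"
    have 1: "seqc Th e (parc Th E (idp Th W)) = parc Th E e" using slide2[of E e] e E by simp
    have 2: "parc Th E e = seqc Th E (parc Th (idp Th A) e)" using slide1[of E e] e E by simp
    have "seqc Th e (seqc Th (parc Th E (idp Th W)) s) = seqc Th (seqc Th e (parc Th E (idp Th W))) s"
      using s e E by (simp add: sassoc)
    also have "\<dots> = seqc Th (seqc Th E (parc Th (idp Th A) e)) s" using 1 2 by simp
    also have "\<dots> = seqc Th E (seqc Th (parc Th (idp Th A) e) s)"
      using s e E by (simp add: sassoc)
    finally show "tpr Th \<tau> E = prob Th (seqc Th E (seqc Th (parc Th (idp Th A) e) s))"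
      unfolding t tpr_def by simp
  qed
qed

lemma PS:
  assumes "E \<in> hom Th A (unitS Th)"
  shows "(idp Th (unitS Th), E, unitS Th) \<in> testers Th (unitS Th) A"
    and "P \<in> hom Th (unitS Th) A \<Longrightarrow> tpr Th (idp Th (unitS Th), E, unitS Th) P = prob Th (seqc Th E P)"
  using assms by (auto simp: testers_def tpr_def)

lemma PE:
  assumes "P \<in> hom Th (unitS Th) A"
  shows "(P, idp Th (unitS Th), unitS Th) \<in> testers Th A (unitS Th)"
    and "E \<in> hom Th A (unitS Th) \<Longrightarrow> tpr Th (P, idp Th (unitS Th), unitS Th) E = prob Th (seqc Th E P)"
  using assms by (auto simp: testers_def tpr_def)

lemma fin_testers: "\<exists>F. finite F \<and> F \<subseteq> testers Th A B \<and>
   (\<forall>L. lc_ok Th A B L \<longrightarrow> (\<forall>\<tau> \<in> F. lc_val (tpr Th \<tau>) L = 0) \<longrightarrow> gpt_eq Th A B L [])"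
  using ot unfolding operational_theory_def by blast

lemma lc_val_cong: "(\<And>c T. (c, T) \<in> set L \<Longrightarrow> f T = g T) \<Longrightarrow> lc_val f L = lc_val g L"
  unfolding lc_val_def by (intro arg_cong[where f=sum_list] map_cong refl) auto

lemma state_zero:
  assumes ok: "lc_ok Th (unitS Th) A L"
    and z: "\<forall>E \<in> hom Th A (unitS Th). lc_val (\<lambda>T. prob Th (seqc Th E T)) L = 0"
  shows "gpt_eq Th (unitS Th) A L []"
  unfolding gpt_eq_def
proof
  fix \<tau> assume t: "\<tau> \<in> testers Th (unitS Th) A"
  obtain E where E: "E \<in> hom Th A (unitS Th)" "\<forall>P. P \<in> hom Th (unitS Th) A \<longrightarrow> tpr Th \<tau> P = prob Th (seqc Th E P)"
    using TS[OF t] by blast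
  have "lc_val (tpr Th \<tau>) L = lc_val (\<lambda>T. prob Th (seqc Th E T)) L"
    by (rule lc_val_cong) (use ok E(2) in \<open>auto simp: lc_ok_def\<close>)
  thus "lc_val (tpr Th \<tau>) L = lc_val (tpr Th \<tau>) []" using z E(1) by simp
qed

lemma effect_zero:
  assumes ok: "lc_ok Th A (unitS Th) L"
    and z: "\<forall>P \<in> hom Th (unitS Th) A. lc_val (\<lambda>T. prob Th (seqc Th T P)) L = 0"
  shows "gpt_eq Th A (unitS Th) L []"
  unfolding gpt_eq_def
proof
  fix \<tau> assume t: "\<tau> \<in> testers Th A (unitS Th)"
  obtain P where P: "P \<in> hom Th (unitS Th) A" "\<forall>E. E \<in> hom Th A (unitS Th) \<longrightarrow> tpr Th \<tau> E = prob Th (seqc Th E P)"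
    using TE[OF t] by blast
  have "lc_val (tpr Th \<tau>) L = lc_val (\<lambda>T. prob Th (seqc Th T P)) L"
    by (rule lc_val_cong) (use ok P(2) in \<open>auto simp: lc_ok_def\<close>)
  thus "lc_val (tpr Th \<tau>) L = lc_val (tpr Th \<tau>) []" using z P(1) by simp
qed

lemma state_lin:
  assumes g: "gpt_eq Th (unitS Th) A [(1, Q)] (map (\<lambda>j. (c j, P j)) [0..<m])"
    and Q: "Q \<in> hom Th (unitS Th) A" and P: "\<forall>j<m. P j \<in> hom Th (unitS Th) A"
    and E: "E \<in> hom Th A (unitS Th)"
  shows "prob Th (seqc Th E Q) = (\<Sum>j<m. c j * prob Th (seqc Th E (P j)))"
proof -
  have "lc_val (tpr Th (idp Th (unitS Th), E, unitS Th)) [(1, Q)] =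
        lc_val (tpr Th (idp Th (unitS Th), E, unitS Th)) (map (\<lambda>j. (c j, P j)) [0..<m])"
    using g PS(1)[OF E] unfolding gpt_eq_def by blast
  thus ?thesis using PS(2)[OF E] Q P by (simp add: lc_val_upt)
qed

lemma effect_lin:
  assumes g: "gpt_eq Th A (unitS Th) [(1, F)] (map (\<lambda>j. (c j, E j)) [0..<m])"
    and F: "F \<in> hom Th A (unitS Th)" and E: "\<forall>j<m. E j \<in> hom Th A (unitS Th)"
    and P: "P \<in> hom Th (unitS Th) A"
  shows "prob Th (seqc Th F P) = (\<Sum>j<m. c j * prob Th (seqc Th (E j) P))"
proof -
  have "lc_val (tpr Th (P, idp Th (unitS Th), unitS Th)) [(1, F)] =
        lc_val (tpr Th (P, idp Th (unitS Th), unitS Th)) (map (\<lambda>j. (c j, E j)) [0..<m])"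
    using g PE(1)[OF P] unfolding gpt_eq_def by blast
  thus ?thesis using PE(2)[OF P] F E by (simp add: lc_val_upt)
qed

definition good :: "'s \<Rightarrow> nat \<Rightarrow> (nat \<Rightarrow> 'p) \<Rightarrow> (nat \<Rightarrow> 'p) \<Rightarrow> bool" where
  "good A m P E \<longleftrightarrow> (\<forall>i<m. P i \<in> hom Th (unitS Th) A) \<and> (\<forall>j<m. E j \<in> hom Th A (unitS Th)) \<and>
     det (Nmat Th m P E) \<noteq> 0"

lemma good_bound: "\<exists>n. \<forall>m P E. good A m P E \<longrightarrow> m \<le> n"
proof -
  obtain F where F: "finite F" "F \<subseteq> testers Th (unitS Th) A"
    "\<forall>L. lc_ok Th (unitS Th) A L \<longrightarrow> (\<forall>\<tau> \<in> F. lc_val (tpr Th \<tau>) L = 0) \<longrightarrow> gpt_eq Th (unitS Th) A L []"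
    using fin_testers[of "unitS Th" A] by (elim exE conjE) (rule that)
  obtain xs where xs: "set xs = F" using finite_list[OF F(1)] by blast
  show ?thesis
  proof (intro exI allI impI)
    fix m P E assume g: "good A m P E"
    show "m \<le> length xs"
    proof (rule ccontr)
      assume "\<not> m \<le> length xs"
      hence lt: "length xs < m" by simp
      let ?n = "length xs"
      define g where "g = (\<lambda>r i. if r < ?n then tpr Th (xs ! r) (P i) else 0)"
      have "det (mat m m (\<lambda>(j, i). g j i)) = 0"
        by (rule ZROW[OF lt]) (simp add: g_def)
      then obtain x where x: "\<forall>j<m. (\<Sum>i<m. g j i * x i) = 0" "\<exists>i<m. x i \<noteq> 0"
        using KER3 by blast
      have ok: "lc_ok Th (unitS Th) A (map (\<lambda>i. (x i, P i)) [0..<m])"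
        using g unfolding good_def lc_ok_def by auto
      have "\<forall>\<tau> \<in> F. lc_val (tpr Th \<tau>) (map (\<lambda>i. (x i, P i)) [0..<m]) = 0"
      proof
        fix \<tau> assume "\<tau> \<in> F"
        then obtain r where r: "r < ?n" "\<tau> = xs ! r" using xs in_set_conv_nth[of \<tau> xs] by blast
        have "(\<Sum>i<m. g r i * x i) = 0" using x(1) r(1) lt by simp
        thus "lc_val (tpr Th \<tau>) (map (\<lambda>i. (x i, P i)) [0..<m]) = 0"
          using r by (simp add: lc_val_upt g_def mult.commute)
      qed
      hence z: "gpt_eq Th (unitS Th) A (map (\<lambda>i. (x i, P i)) [0..<m]) []" using F(3) ok by blast
      have "\<forall>j<m. (\<Sum>i<m. prob Th (seqc Th (E j) (P i)) * x i) = 0"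
      proof (intro allI impI)
        fix j assume j: "j < m"
        have Ej: "E j \<in> hom Th A (unitS Th)" using g j unfolding good_def by auto
        have "lc_val (tpr Th (idp Th (unitS Th), E j, unitS Th)) (map (\<lambda>i. (x i, P i)) [0..<m]) =
              lc_val (tpr Th (idp Th (unitS Th), E j, unitS Th)) []"
          using z PS(1)[OF Ej] unfolding gpt_eq_def by blast
        hence "lc_val (tpr Th (idp Th (unitS Th), E j, unitS Th)) (map (\<lambda>i. (x i, P i)) [0..<m]) = 0"
          by simp
        thus "(\<Sum>i<m. prob Th (seqc Th (E j) (P i)) * x i) = 0"
          using PS(2)[OF Ej] g unfolding good_def by (simp add: lc_val_upt mult.commute)
      qed
      moreover have "det (mat m m (\<lambda>(j, i). prob Th (seqc Th (E j) (P i)))) \<noteq> 0"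
        using g unfolding good_def Nmat_def by simp
      ultimately have "\<forall>i<m. x i = 0" using KER[of m "\<lambda>j i. prob Th (seqc Th (E j) (P i))" x]
        by (simp add: mult.commute)
      thus False using x(2) by blast
    qed
  qed
qed

lemma good0: "good A 0 P E"
  unfolding good_def Nmat_def by (auto intro: KER2)

lemma max_good: "\<exists>m P E. good A m P E \<and> (\<forall>m' P' E'. good A m' P' E' \<longrightarrow> m' \<le> m)"
proof -
  obtain n where n: "\<forall>m P E. good A m P E \<longrightarrow> m \<le> n" using good_bound by blast
  let ?S = "{m. \<exists>P E. good A m P E}"
  have sub: "?S \<subseteq> {..n}" using n by blast
  have fin: "finite ?S" using finite_subset[OF sub] by simp
  have ne: "0 \<in> ?S" using good0 by blast
  have "Max ?S \<in> ?S" using fin ne Max_in by blast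
  then obtain P E where "good A (Max ?S) P E" by blast
  moreover have "\<forall>m' P' E'. good A m' P' E' \<longrightarrow> m' \<le> Max ?S"
  proof (intro allI impI)
    fix m' P' E' assume "good A m' P' E'"
    hence "m' \<in> ?S" by blast
    thus "m' \<le> Max ?S" using Max_ge[OF fin] by blast
  qed
  ultimately show ?thesis by blast
qed

lemma good_det: "good A m P E \<Longrightarrow> det (mat m m (\<lambda>(j, i). prob Th (seqc Th (E j) (P i)))) \<noteq> 0"
  unfolding good_def Nmat_def by simp

lemma good_states_indep:
  assumes g: "good A m P E" and z: "gpt_eq Th (unitS Th) A (map (\<lambda>j. (c j, P j)) [0..<m]) []"
  shows "\<forall>j<m. c j = 0"
proof -
  have "\<forall>j<m. (\<Sum>i<m. prob Th (seqc Th (E j) (P i)) * c i) = 0"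
  proof (intro allI impI)
    fix j assume j: "j < m"
    have Ej: "E j \<in> hom Th A (unitS Th)" using g j unfolding good_def by auto
    have "lc_val (tpr Th (idp Th (unitS Th), E j, unitS Th)) (map (\<lambda>i. (c i, P i)) [0..<m]) =
          lc_val (tpr Th (idp Th (unitS Th), E j, unitS Th)) []"
      using z PS(1)[OF Ej] unfolding gpt_eq_def by blast
    hence "lc_val (tpr Th (idp Th (unitS Th), E j, unitS Th)) (map (\<lambda>i. (c i, P i)) [0..<m]) = 0"
      by simp
    thus "(\<Sum>i<m. prob Th (seqc Th (E j) (P i)) * c i) = 0"
      using PS(2)[OF Ej] g unfolding good_def by (simp add: lc_val_upt mult.commute)
  qed
  thus ?thesis using KER[of m "\<lambda>j i. prob Th (seqc Th (E j) (P i))" c] good_det[OF g] by blast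
qed

lemma good_effects_indep:
  assumes g: "good A m P E" and z: "gpt_eq Th A (unitS Th) (map (\<lambda>j. (c j, E j)) [0..<m]) []"
  shows "\<forall>j<m. c j = 0"
proof -
  have "\<forall>j<m. (\<Sum>i<m. prob Th (seqc Th (E i) (P j)) * c i) = 0"
  proof (intro allI impI)
    fix j assume j: "j < m"
    have Pj: "P j \<in> hom Th (unitS Th) A" using g j unfolding good_def by auto
    have "lc_val (tpr Th (P j, idp Th (unitS Th), unitS Th)) (map (\<lambda>i. (c i, E i)) [0..<m]) =
          lc_val (tpr Th (P j, idp Th (unitS Th), unitS Th)) []"
      using z PE(1)[OF Pj] unfolding gpt_eq_def by blast
    hence "lc_val (tpr Th (P j, idp Th (unitS Th), unitS Th)) (map (\<lambda>i. (c i, E i)) [0..<m]) = 0"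
      by simp
    thus "(\<Sum>i<m. prob Th (seqc Th (E i) (P j)) * c i) = 0"
      using PE(2)[OF Pj] g unfolding good_def by (simp add: lc_val_upt mult.commute)
  qed
  moreover have "det (mat m m (\<lambda>(j, i). prob Th (seqc Th (E i) (P j)))) \<noteq> 0"
    using good_det[OF g] DET_T[of m "\<lambda>j i. prob Th (seqc Th (E j) (P i))"] by simp
  ultimately show ?thesis using KER[of m "\<lambda>j i. prob Th (seqc Th (E i) (P j))" c] by blast
qed

lemma good_states_span:
  assumes g: "good A m P E" and mx: "\<forall>m' P' E'. good A m' P' E' \<longrightarrow> m' \<le> m"
    and Q: "Q \<in> hom Th (unitS Th) A"
  shows "\<exists>c. gpt_eq Th (unitS Th) A [(1, Q)] (map (\<lambda>j. (c j, P j)) [0..<m])"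
proof -
  obtain x where x: "\<forall>j<m. (\<Sum>i<m. prob Th (seqc Th (E j) (P i)) * x i) = prob Th (seqc Th (E j) Q)"
    using SOLVE[OF good_det[OF g], where a = "\<lambda>j. prob Th (seqc Th (E j) Q)"] by blast
  show ?thesis
  proof (rule ccontr)
    assume "\<nexists>c. gpt_eq Th (unitS Th) A [(1, Q)] (map (\<lambda>j. (c j, P j)) [0..<m])"
    hence "\<not> gpt_eq Th (unitS Th) A [(1, Q)] (map (\<lambda>j. (x j, P j)) [0..<m])" by blast
    then obtain \<tau> where t: "\<tau> \<in> testers Th (unitS Th) A"
      "lc_val (tpr Th \<tau>) [(1, Q)] \<noteq> lc_val (tpr Th \<tau>) (map (\<lambda>j. (x j, P j)) [0..<m])"
      unfolding gpt_eq_def by blast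
    obtain F where F: "F \<in> hom Th A (unitS Th)" "\<forall>P. P \<in> hom Th (unitS Th) A \<longrightarrow> tpr Th \<tau> P = prob Th (seqc Th F P)"
      using TS[OF t(1)] by blast
    have Ph: "\<forall>i<m. P i \<in> hom Th (unitS Th) A" and Eh: "\<forall>j<m. E j \<in> hom Th A (unitS Th)"
      using g unfolding good_def by auto
    have ne: "prob Th (seqc Th F Q) \<noteq> (\<Sum>i<m. prob Th (seqc Th F (P i)) * x i)"
      using t(2) F(2) Q Ph by (simp add: lc_val_upt mult.commute)
    define P' where "P' = P(m := Q)"
    define E' where "E' = E(m := F)"
    define f where "f = (\<lambda>j i. prob Th (seqc Th (E' j) (P' i)))"
    have eqm: "mat m m (\<lambda>(j, i). f j i) = mat m m (\<lambda>(j, i). prob Th (seqc Th (E j) (P i)))"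
      by (rule eq_matI) (auto simp: f_def P'_def E'_def)
    have "det (mat (Suc m) (Suc m) (\<lambda>(j, i). f j i)) \<noteq> 0"
    proof (rule EXT[where x = x])
      show "det (mat m m (\<lambda>(j, i). f j i)) \<noteq> 0" using eqm good_det[OF g] by simp
      show "\<forall>j<m. (\<Sum>i<m. f j i * x i) = f j m"
        using x by (simp add: f_def P'_def E'_def)
      show "f m m \<noteq> (\<Sum>i<m. f m i * x i)" using ne by (simp add: f_def P'_def E'_def)
    qed
    moreover have "\<forall>i<Suc m. P' i \<in> hom Th (unitS Th) A"
      using Ph Q unfolding P'_def by (auto simp only: less_Suc_eq fun_upd_apply) auto
    moreover have "\<forall>i<Suc m. E' i \<in> hom Th A (unitS Th)"
      using Eh F(1) unfolding E'_def by (auto simp only: less_Suc_eq fun_upd_apply) auto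
    ultimately have "good A (Suc m) P' E'"
      unfolding good_def Nmat_def f_def by blast
    hence "Suc m \<le> m" using mx by blast
    thus False by simp
  qed
qed

lemma good_effects_span:
  assumes g: "good A m P E" and mx: "\<forall>m' P' E'. good A m' P' E' \<longrightarrow> m' \<le> m"
    and Q: "Q \<in> hom Th A (unitS Th)"
  shows "\<exists>c. gpt_eq Th A (unitS Th) [(1, Q)] (map (\<lambda>j. (c j, E j)) [0..<m])"
proof -
  have dT: "det (mat m m (\<lambda>(j, i). prob Th (seqc Th (E i) (P j)))) \<noteq> 0"
    using good_det[OF g] DET_T[of m "\<lambda>j i. prob Th (seqc Th (E j) (P i))"] by simp
  obtain x where x: "\<forall>j<m. (\<Sum>i<m. prob Th (seqc Th (E i) (P j)) * x i) = prob Th (seqc Th Q (P j))"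
    using SOLVE[OF dT, where a = "\<lambda>j. prob Th (seqc Th Q (P j))"] by blast
  show ?thesis
  proof (rule ccontr)
    assume "\<nexists>c. gpt_eq Th A (unitS Th) [(1, Q)] (map (\<lambda>j. (c j, E j)) [0..<m])"
    hence "\<not> gpt_eq Th A (unitS Th) [(1, Q)] (map (\<lambda>j. (x j, E j)) [0..<m])" by blast
    then obtain \<tau> where t: "\<tau> \<in> testers Th A (unitS Th)"
      "lc_val (tpr Th \<tau>) [(1, Q)] \<noteq> lc_val (tpr Th \<tau>) (map (\<lambda>j. (x j, E j)) [0..<m])"
      unfolding gpt_eq_def by blast
    obtain R where R: "R \<in> hom Th (unitS Th) A" "\<forall>E. E \<in> hom Th A (unitS Th) \<longrightarrow> tpr Th \<tau> E = prob Th (seqc Th E R)"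
      using TE[OF t(1)] by blast
    have Ph: "\<forall>i<m. P i \<in> hom Th (unitS Th) A" and Eh: "\<forall>j<m. E j \<in> hom Th A (unitS Th)"
      using g unfolding good_def by auto
    have ne: "prob Th (seqc Th Q R) \<noteq> (\<Sum>i<m. prob Th (seqc Th (E i) R) * x i)"
      using t(2) R(2) Q Eh by (simp add: lc_val_upt mult.commute)
    define P' where "P' = P(m := R)"
    define E' where "E' = E(m := Q)"
    define f where "f = (\<lambda>j i. prob Th (seqc Th (E' i) (P' j)))"
    have eqm: "mat m m (\<lambda>(j, i). f j i) = mat m m (\<lambda>(j, i). prob Th (seqc Th (E i) (P j)))"
      by (rule eq_matI) (auto simp: f_def P'_def E'_def)
    have "det (mat (Suc m) (Suc m) (\<lambda>(j, i). f j i)) \<noteq> 0"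
    proof (rule EXT[where x = x])
      show "det (mat m m (\<lambda>(j, i). f j i)) \<noteq> 0" using eqm dT by simp
      show "\<forall>j<m. (\<Sum>i<m. f j i * x i) = f j m"
        using x by (simp add: f_def P'_def E'_def)
      show "f m m \<noteq> (\<Sum>i<m. f m i * x i)" using ne by (simp add: f_def P'_def E'_def)
    qed
    hence "det (mat (Suc m) (Suc m) (\<lambda>(j, i). prob Th (seqc Th (E' j) (P' i)))) \<noteq> 0"
      using DET_T[of "Suc m" "\<lambda>j i. prob Th (seqc Th (E' j) (P' i))"] by (simp add: f_def)
    moreover have "\<forall>i<Suc m. P' i \<in> hom Th (unitS Th) A"
      using Ph R(1) unfolding P'_def by (auto simp only: less_Suc_eq fun_upd_apply) auto
    moreover have "\<forall>i<Suc m. E' i \<in> hom Th A (unitS Th)"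
      using Eh Q unfolding E'_def by (auto simp only: less_Suc_eq fun_upd_apply) auto
    ultimately have "good A (Suc m) P' E'"
      unfolding good_def Nmat_def by blast
    hence "Suc m \<le> m" using mx by blast
    thus False by simp
  qed
qed

lemma bases_exist: "\<exists>m P E. lin_indep_spanning_states Th A m P \<and> lin_indep_spanning_effects Th A m E"
proof -
  obtain m P E where g: "good A m P E" and mx: "\<forall>m' P' E'. good A m' P' E' \<longrightarrow> m' \<le> m"
    using max_good by blast
  have "lin_indep_spanning_states Th A m P"
    unfolding lin_indep_spanning_states_def lin_indep_spanning_def
    using g good_states_indep[OF g] good_states_span[OF g mx] unfolding good_def by blast
  moreover have "lin_indep_spanning_effects Th A m E"
    unfolding lin_indep_spanning_effects_def lin_indep_spanning_def
    using g good_effects_indep[OF g] good_effects_span[OF g mx] unfolding good_def by blast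
  ultimately show ?thesis by blast
qed

lemma sl_upt: "sum_list (map g [0..<m]) = (\<Sum>j<m. g j)"
  by (induction m) auto

lemma lc_val_concat: "lc_val f (concat Ls) = sum_list (map (lc_val f) Ls)"
  unfolding lc_val_def by (induction Ls) auto

lemma lc_val_expansion:
  "lc_val f (id_expansion Th m M P E) = (\<Sum>j<m. \<Sum>i<m. M $$ (j, i) * f (seqc Th (P j) (E i)))"
  unfolding id_expansion_def lc_val_concat by (simp add: sl_upt lc_val_upt o_def)

definition Dsys :: "'s \<Rightarrow> bool" where
  "Dsys A \<longleftrightarrow> (\<exists>m M P E. (\<forall>j<m. P j \<in> hom Th (unitS Th) A) \<and> (\<forall>i<m. E i \<in> hom Th A (unitS Th)) \<and>
      gpt_eq Th A A [(1, idp Th A)] (id_expansion Th m M P E))"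

lemma D_use:
  assumes g: "gpt_eq Th A A [(1, idp Th A)] (id_expansion Th m M P E)"
    and s: "s \<in> hom Th (unitS Th) (tensS Th A W)" and e: "e \<in> hom Th (tensS Th A W) (unitS Th)"
  shows "prob Th (seqc Th e s) =
    (\<Sum>j<m. \<Sum>i<m. M $$ (j, i) * prob Th (seqc Th e (seqc Th (parc Th (seqc Th (P j) (E i)) (idp Th W)) s)))"
proof -
  have t: "(s, e, W) \<in> testers Th A A" using s e unfolding testers_def by simp
  have "lc_val (tpr Th (s, e, W)) [(1, idp Th A)] = lc_val (tpr Th (s, e, W)) (id_expansion Th m M P E)"
    using g t unfolding gpt_eq_def by blast
  moreover have "lc_val (tpr Th (s, e, W)) [(1, idp Th A)] = prob Th (seqc Th e s)"
    using s by (simp add: tpr_def id_tens[symmetric])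
  ultimately show ?thesis by (simp add: lc_val_expansion tpr_def)
qed

lemma tensL_simps[simp]: "tensL Th [] = unitS Th" "tensL Th (A # As) = tensS Th A (tensL Th As)"
  by (simp_all add: tensL_def)
lemma parL_simps[simp]: "parL Th [] = idp Th (unitS Th)" "parL Th (P # Ps) = parc Th P (parL Th Ps)"
  by (simp_all add: parL_def)

definition st_list :: "'s list \<Rightarrow> 'p list \<Rightarrow> bool" where
  "st_list As Ps \<longleftrightarrow> length Ps = length As \<and> (\<forall>k < length As. Ps ! k \<in> hom Th (unitS Th) (As ! k))"
definition ef_list :: "'s list \<Rightarrow> 'p list \<Rightarrow> bool" where
  "ef_list As Es \<longleftrightarrow> length Es = length As \<and> (\<forall>k < length As. Es ! k \<in> hom Th (As ! k) (unitS Th))"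

lemma st_list_Nil[simp]: "st_list [] []" by (simp add: st_list_def)
lemma ef_list_Nil[simp]: "ef_list [] []" by (simp add: ef_list_def)
lemma st_list_Cons[simp]: "st_list (A # As) (P # Ps) \<longleftrightarrow> P \<in> hom Th (unitS Th) A \<and> st_list As Ps"
  unfolding st_list_def hom_iff by (auto simp: nth_Cons split: nat.splits)
lemma ef_list_Cons[simp]: "ef_list (A # As) (P # Ps) \<longleftrightarrow> P \<in> hom Th A (unitS Th) \<and> ef_list As Ps"
  unfolding ef_list_def hom_iff by (auto simp: nth_Cons split: nat.splits)

lemma st_list_hom: "st_list As Ps \<Longrightarrow> parL Th Ps \<in> hom Th (unitS Th) (tensL Th As)"
proof (induction As arbitrary: Ps)
  case Nil thus ?case by (simp add: st_list_def)
next
  case (Cons A As)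
  then obtain P Ps' where "Ps = P # Ps'" by (cases Ps) (auto simp: st_list_def)
  thus ?case using Cons by simp
qed

lemma ef_list_hom: "ef_list As Es \<Longrightarrow> parL Th Es \<in> hom Th (tensL Th As) (unitS Th)"
proof (induction As arbitrary: Es)
  case Nil thus ?case by (simp add: ef_list_def)
next
  case (Cons A As)
  then obtain P Ps' where "Es = P # Ps'" by (cases Es) (auto simp: ef_list_def)
  thus ?case using Cons by simp
qed

lemma step1:
  assumes Pj: "Pj \<in> hom Th (unitS Th) A" and Ei: "Ei \<in> hom Th A (unitS Th)"
    and s: "s \<in> hom Th (unitS Th) (tensS Th A V)" and e: "e \<in> hom Th (tensS Th A V) (unitS Th)"
  shows "seqc Th e (seqc Th (parc Th (seqc Th Pj Ei) (idp Th V)) s) =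
         seqc Th (seqc Th e (parc Th Pj (idp Th V))) (seqc Th (parc Th Ei (idp Th V)) s)"
proof -
  have "parc Th (seqc Th Pj Ei) (idp Th V) = parc Th (seqc Th Pj Ei) (seqc Th (idp Th V) (idp Th V))"
    by simp
  also have "\<dots> = seqc Th (parc Th Pj (idp Th V)) (parc Th Ei (idp Th V))"
    using Pj Ei by (intro interchange) auto
  finally have 1: "parc Th (seqc Th Pj Ei) (idp Th V) = seqc Th (parc Th Pj (idp Th V)) (parc Th Ei (idp Th V))" .
  show ?thesis unfolding 1 using Pj Ei s e by (simp add: sassoc)
qed

lemma step2:
  assumes Ei: "Ei \<in> hom Th A (unitS Th)" and Es: "Es \<in> hom Th R (unitS Th)"
    and s: "s \<in> hom Th (unitS Th) (tensS Th A (tensS Th R W))"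
  shows "seqc Th (parc Th Es (idp Th W)) (seqc Th (parc Th Ei (idp Th (tensS Th R W))) s) =
         seqc Th (parc Th (parc Th Ei Es) (idp Th W)) s"
proof -
  have 1: "parc Th Ei (idp Th (tensS Th R W)) = parc Th (parc Th Ei (idp Th R)) (idp Th W)"
    by (simp add: id_tens passoc)
  have 2: "seqc Th Es (parc Th Ei (idp Th R)) = parc Th Ei Es"
    using slide2[of Ei Es] Ei Es by simp
  have "seqc Th (parc Th Es (idp Th W)) (seqc Th (parc Th (parc Th Ei (idp Th R)) (idp Th W)) s) =
        seqc Th (seqc Th (parc Th Es (idp Th W)) (parc Th (parc Th Ei (idp Th R)) (idp Th W))) s"
    using Ei Es s by (intro sassoc) (auto simp: tassoc)
  also have "seqc Th (parc Th Es (idp Th W)) (parc Th (parc Th Ei (idp Th R)) (idp Th W)) =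
             parc Th (seqc Th Es (parc Th Ei (idp Th R))) (seqc Th (idp Th W) (idp Th W))"
    using Ei Es by (intro interchange[symmetric]) auto
  finally show ?thesis unfolding 1 2 by simp
qed

lemma step3:
  assumes Pj: "Pj \<in> hom Th (unitS Th) A" and Ps: "Ps \<in> hom Th (unitS Th) R"
    and t: "t \<in> hom Th (unitS Th) W" and e: "e \<in> hom Th (tensS Th A (tensS Th R W)) (unitS Th)"
  shows "seqc Th (seqc Th e (parc Th Pj (idp Th (tensS Th R W)))) (parc Th Ps t) =
         seqc Th e (parc Th (parc Th Pj Ps) t)"
proof -
  have 1: "seqc Th (parc Th Pj (idp Th (tensS Th R W))) (parc Th Ps t) = parc Th Pj (parc Th Ps t)"
    using slide1[of Pj "parc Th Ps t"] Pj Ps t by simp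
  have "seqc Th (seqc Th e (parc Th Pj (idp Th (tensS Th R W)))) (parc Th Ps t) =
        seqc Th e (seqc Th (parc Th Pj (idp Th (tensS Th R W))) (parc Th Ps t))"
    using Pj Ps t e by (intro sassoc[symmetric]) auto
  thus ?thesis unfolding 1 by (simp add: passoc)
qed

lemma sum_list_concat_map: "sum_list (map f (concat xss)) = sum_list (map (\<lambda>xs. sum_list (map f xs)) xss)"
  by (induction xss) auto

lemma peel:
  assumes "\<forall>k<length As. Dsys (As ! k)"
  shows "\<exists>X. (\<forall>x \<in> set X. st_list As (fst (snd x)) \<and> ef_list As (snd (snd x))) \<and>
    (\<forall>W \<sigma> e. \<sigma> \<in> hom Th (unitS Th) (tensS Th (tensL Th As) W) \<longrightarrow> e \<in> hom Th (tensS Th (tensL Th As) W) (unitS Th) \<longrightarrow>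
       prob Th (seqc Th e \<sigma>) = sum_list (map (\<lambda>(c, Ps, Es). c * prob Th (seqc Th e (parc Th (parL Th Ps)
           (seqc Th (parc Th (parL Th Es) (idp Th W)) \<sigma>)))) X))"
  using assms
proof (induction As)
  case Nil
  show ?case
  proof (intro exI[of _ "[(1, [], [])]"] conjI allI impI)
    fix W \<sigma> e assume "\<sigma> \<in> hom Th (unitS Th) (tensS Th (tensL Th []) W)"
    thus "prob Th (seqc Th e \<sigma>) = sum_list (map (\<lambda>(c, Ps, Es). c * prob Th (seqc Th e (parc Th (parL Th Ps)
           (seqc Th (parc Th (parL Th Es) (idp Th W)) \<sigma>)))) [(1, [], [])])" by simp
  qed simp
next
  case (Cons A As)
  have DA: "Dsys A" using Cons.prems by force
  have "\<forall>k<length As. Dsys (As ! k)" using Cons.prems by force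
  then obtain X' where X'1: "\<forall>x \<in> set X'. st_list As (fst (snd x)) \<and> ef_list As (snd (snd x))"
    and X'2: "\<And>W \<sigma> e. \<sigma> \<in> hom Th (unitS Th) (tensS Th (tensL Th As) W) \<Longrightarrow> e \<in> hom Th (tensS Th (tensL Th As) W) (unitS Th) \<Longrightarrow>
       prob Th (seqc Th e \<sigma>) = sum_list (map (\<lambda>(c, Ps, Es). c * prob Th (seqc Th e (parc Th (parL Th Ps)
           (seqc Th (parc Th (parL Th Es) (idp Th W)) \<sigma>)))) X')"
    using Cons.IH by blast
  obtain m M P E where P: "\<forall>j<m. P j \<in> hom Th (unitS Th) A" and E: "\<forall>i<m. E i \<in> hom Th A (unitS Th)"
    and g: "gpt_eq Th A A [(1, idp Th A)] (id_expansion Th m M P E)"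
    using DA unfolding Dsys_def by blast
  define R where "R = tensL Th As"
  define X where "X = concat (map (\<lambda>j. concat (map (\<lambda>i. map (\<lambda>(c, Ps, Es). (M $$ (j, i) * c, P j # Ps, E i # Es)) X') [0..<m])) [0..<m])"
  show ?case
  proof (intro exI[of _ X] conjI allI impI)
    show "\<forall>x \<in> set X. st_list (A # As) (fst (snd x)) \<and> ef_list (A # As) (snd (snd x))"
      using X'1 P E unfolding X_def by auto
    fix W \<sigma> e
    assume s: "\<sigma> \<in> hom Th (unitS Th) (tensS Th (tensL Th (A # As)) W)"
      and e: "e \<in> hom Th (tensS Th (tensL Th (A # As)) W) (unitS Th)"
    have s': "\<sigma> \<in> hom Th (unitS Th) (tensS Th A (tensS Th R W))" using s by (simp add: R_def tassoc)
    have e': "e \<in> hom Th (tensS Th A (tensS Th R W)) (unitS Th)" using e by (simp add: R_def tassoc)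
    define ej where "ej = (\<lambda>j. seqc Th e (parc Th (P j) (idp Th (tensS Th R W))))"
    define si where "si = (\<lambda>i. seqc Th (parc Th (E i) (idp Th (tensS Th R W))) \<sigma>)"
    have ejh: "\<And>j. j < m \<Longrightarrow> ej j \<in> hom Th (tensS Th R W) (unitS Th)"
      using P e' unfolding ej_def by simp
    have sih: "\<And>i. i < m \<Longrightarrow> si i \<in> hom Th (unitS Th) (tensS Th R W)"
      using E s' unfolding si_def by simp
    have "prob Th (seqc Th e \<sigma>) =
      (\<Sum>j<m. \<Sum>i<m. M $$ (j, i) * prob Th (seqc Th e (seqc Th (parc Th (seqc Th (P j) (E i)) (idp Th (tensS Th R W))) \<sigma>)))"
      by (rule D_use[OF g s' e'])
    also have "\<dots> = (\<Sum>j<m. \<Sum>i<m. M $$ (j, i) * prob Th (seqc Th (ej j) (si i)))"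
      using step1[OF _ _ s' e'] P E unfolding ej_def si_def by simp
    also have "\<dots> = (\<Sum>j<m. \<Sum>i<m. M $$ (j, i) * sum_list (map (\<lambda>(c, Ps, Es). c *
        prob Th (seqc Th e (parc Th (parc Th (P j) (parL Th Ps)) (seqc Th (parc Th (parc Th (E i) (parL Th Es)) (idp Th W)) \<sigma>)))) X'))"
    proof (intro sum.cong refl)
      fix j i assume j: "j \<in> {..<m}" and i: "i \<in> {..<m}"
      have "prob Th (seqc Th (ej j) (si i)) = sum_list (map (\<lambda>(c, Ps, Es). c * prob Th (seqc Th (ej j) (parc Th (parL Th Ps)
           (seqc Th (parc Th (parL Th Es) (idp Th W)) (si i))))) X')"
        using X'2[of "si i" W "ej j"] sih ejh i j unfolding R_def by simp
      also have "\<dots> = sum_list (map (\<lambda>(c, Ps, Es). c *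
        prob Th (seqc Th e (parc Th (parc Th (P j) (parL Th Ps)) (seqc Th (parc Th (parc Th (E i) (parL Th Es)) (idp Th W)) \<sigma>)))) X')"
      proof (intro arg_cong[where f = sum_list] map_cong refl)
        fix x assume x: "x \<in> set X'"
        obtain c Ps Es where xx: "x = (c, Ps, Es)" by (cases x) auto
        have Psh: "parL Th Ps \<in> hom Th (unitS Th) R" using X'1 x xx st_list_hom unfolding R_def by fastforce
        have Esh: "parL Th Es \<in> hom Th R (unitS Th)" using X'1 x xx ef_list_hom unfolding R_def by fastforce
        have 2: "seqc Th (parc Th (parL Th Es) (idp Th W)) (si i) = seqc Th (parc Th (parc Th (E i) (parL Th Es)) (idp Th W)) \<sigma>"
          unfolding si_def using step2[OF _ Esh s'] E i by simp
        have th: "seqc Th (parc Th (parc Th (E i) (parL Th Es)) (idp Th W)) \<sigma> \<in> hom Th (unitS Th) W"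
          using E i Esh s' by (simp add: tassoc)
        have 3: "seqc Th (ej j) (parc Th (parL Th Ps) (seqc Th (parc Th (parc Th (E i) (parL Th Es)) (idp Th W)) \<sigma>)) =
           seqc Th e (parc Th (parc Th (P j) (parL Th Ps)) (seqc Th (parc Th (parc Th (E i) (parL Th Es)) (idp Th W)) \<sigma>))"
          unfolding ej_def using step3[OF _ Psh th e'] P j by simp
        show "(case x of (c, Ps, Es) \<Rightarrow> c * prob Th (seqc Th (ej j) (parc Th (parL Th Ps) (seqc Th (parc Th (parL Th Es) (idp Th W)) (si i))))) =
          (case x of (c, Ps, Es) \<Rightarrow> c * prob Th (seqc Th e (parc Th (parc Th (P j) (parL Th Ps)) (seqc Th (parc Th (parc Th (E i) (parL Th Es)) (idp Th W)) \<sigma>))))"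
          unfolding xx using 2 3 by simp
      qed
      finally show "M $$ (j, i) * prob Th (seqc Th (ej j) (si i)) = M $$ (j, i) * sum_list (map (\<lambda>(c, Ps, Es). c *
        prob Th (seqc Th e (parc Th (parc Th (P j) (parL Th Ps)) (seqc Th (parc Th (parc Th (E i) (parL Th Es)) (idp Th W)) \<sigma>)))) X')"
        by simp
    qed
    also have "\<dots> = sum_list (map (\<lambda>(c, Ps, Es). c * prob Th (seqc Th e (parc Th (parL Th Ps)
           (seqc Th (parc Th (parL Th Es) (idp Th W)) \<sigma>)))) X)"
      unfolding X_def
      by (simp add: sum_list_concat_map sl_upt o_def sum_list_const_mult[symmetric] case_prod_beta mult.assoc)
    finally show "prob Th (seqc Th e \<sigma>) = sum_list (map (\<lambda>(c, Ps, Es). c * prob Th (seqc Th e (parc Th (parL Th Ps)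
           (seqc Th (parc Th (parL Th Es) (idp Th W)) \<sigma>)))) X)" .
  qed
qed

lemma lc_lin:
  assumes "\<forall>x \<in> set L. f (snd x) = sum_list (map (\<lambda>y. k y (snd x)) ys)"
  shows "lc_val f L = sum_list (map (\<lambda>y. lc_val (k y) L) ys)"
  using assms
proof (induction L)
  case Nil thus ?case by (simp add: sum_list_const_mult[symmetric])
next
  case (Cons a L)
  obtain c T where a: "a = (c, T)" by (cases a)
  have "lc_val f (a # L) = c * f T + lc_val f L" by (simp add: a)
  also have "\<dots> = c * sum_list (map (\<lambda>y. k y T) ys) + sum_list (map (\<lambda>y. lc_val (k y) L) ys)"
    using Cons by (simp add: a)
  also have "\<dots> = sum_list (map (\<lambda>y. lc_val (k y) (a # L)) ys)"
    by (simp add: a sum_list_const_mult[symmetric] sum_list_addf)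
  finally show ?case .
qed

lemma lc_eq:
  assumes "\<forall>x \<in> set L. f (snd x) = sum_list (map (\<lambda>y. k y (snd x)) ys)"
    and "\<forall>x \<in> set L'. f (snd x) = sum_list (map (\<lambda>y. k y (snd x)) ys)"
    and "\<forall>y \<in> set ys. lc_val (k y) L = lc_val (k y) L'"
  shows "lc_val f L = lc_val f L'"
  using lc_lin[OF assms(1)] lc_lin[OF assms(2)] assms(3)
  by (metis (no_types, lifting) map_cong)

lemma lc_val_scale: "lc_val (\<lambda>T. a * g T) L = a * lc_val g L"
  unfolding lc_val_def by (induction L) (auto simp: algebra_simps)

lemma TL_from_D:
  assumes D: "\<forall>A. Dsys A"
  shows "tomographically_local Th"
  unfolding tomographically_local_def
proof (intro allI impI)
  fix As Bs L L'
  assume ok: "lc_ok Th (tensL Th As) (tensL Th Bs) L" and ok': "lc_ok Th (tensL Th As) (tensL Th Bs) L'"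
  assume H: "\<forall>Ps Es. length Ps = length As \<longrightarrow> (\<forall>k < length As. Ps ! k \<in> hom Th (unitS Th) (As ! k)) \<longrightarrow>
                 length Es = length Bs \<longrightarrow> (\<forall>k < length Bs. Es ! k \<in> hom Th (Bs ! k) (unitS Th)) \<longrightarrow>
            lc_val (\<lambda>T. prob Th (seqc Th (parL Th Es) (seqc Th T (parL Th Ps)))) L =
            lc_val (\<lambda>T. prob Th (seqc Th (parL Th Es) (seqc Th T (parL Th Ps)))) L'"
  let ?X = "tensL Th As" and ?Y = "tensL Th Bs"
  obtain X1 where X11: "\<forall>x \<in> set X1. st_list As (fst (snd x)) \<and> ef_list As (snd (snd x))"
    and X12: "\<And>W \<sigma> e. \<sigma> \<in> hom Th (unitS Th) (tensS Th ?X W) \<Longrightarrow> e \<in> hom Th (tensS Th ?X W) (unitS Th) \<Longrightarrow>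
       prob Th (seqc Th e \<sigma>) = sum_list (map (\<lambda>(c, Ps, Es). c * prob Th (seqc Th e (parc Th (parL Th Ps)
           (seqc Th (parc Th (parL Th Es) (idp Th W)) \<sigma>)))) X1)"
    using peel[of As] D by blast
  obtain X2 where X21: "\<forall>x \<in> set X2. st_list Bs (fst (snd x)) \<and> ef_list Bs (snd (snd x))"
    and X22: "\<And>W \<sigma> e. \<sigma> \<in> hom Th (unitS Th) (tensS Th ?Y W) \<Longrightarrow> e \<in> hom Th (tensS Th ?Y W) (unitS Th) \<Longrightarrow>
       prob Th (seqc Th e \<sigma>) = sum_list (map (\<lambda>(c, Ps, Es). c * prob Th (seqc Th e (parc Th (parL Th Ps)
           (seqc Th (parc Th (parL Th Es) (idp Th W)) \<sigma>)))) X2)"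
    using peel[of Bs] D by blast
  show "gpt_eq Th ?X ?Y L L'"
    unfolding gpt_eq_def
  proof
    fix \<tau> assume "\<tau> \<in> testers Th ?X ?Y"
    then obtain s e W where t: "\<tau> = (s, e, W)" and s: "s \<in> hom Th (unitS Th) (tensS Th ?X W)"
      and e: "e \<in> hom Th (tensS Th ?Y W) (unitS Th)"
      unfolding testers_def by auto
    define w where "w = (\<lambda>Es. seqc Th (parc Th (parL Th Es) (idp Th W)) s)"
    define eps where "eps = (\<lambda>Es. seqc Th e (parc Th (idp Th ?Y) (w Es)))"
    define G where "G = (\<lambda>Es' Ps T. prob Th (seqc Th (parL Th Es') (seqc Th T (parL Th Ps))))"
    define k2 where "k2 = (\<lambda>x1 x2 T. fst x1 * fst x2 * prob Th (seqc Th (eps (snd (snd x1))) (parL Th (fst (snd x2)))) *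
        G (snd (snd x2)) (fst (snd x1)) T)"
    define k1 where "k1 = (\<lambda>x1 T. sum_list (map (\<lambda>x2. k2 x1 x2 T) X2))"
    have expand: "tpr Th \<tau> T = sum_list (map (\<lambda>x1. k1 x1 T) X1)" if T: "T \<in> hom Th ?X ?Y" for T
    proof -
      have "tpr Th \<tau> T = prob Th (seqc Th (seqc Th e (parc Th T (idp Th W))) s)"
        unfolding t tpr_def using T s e by (simp add: sassoc)
      also have "\<dots> = sum_list (map (\<lambda>(c, Ps, Es). c * prob Th (seqc Th (seqc Th e (parc Th T (idp Th W))) (parc Th (parL Th Ps)
           (w Es)))) X1)"
        unfolding w_def using X12[OF s] T e by simp
      also have "\<dots> = sum_list (map (\<lambda>x1. k1 x1 T) X1)"
      proof (intro arg_cong[where f = sum_list] map_cong refl)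
        fix x1 assume x1: "x1 \<in> set X1"
        obtain c Ps Es where xx: "x1 = (c, Ps, Es)" by (cases x1) auto
        have Psh: "parL Th Ps \<in> hom Th (unitS Th) ?X" using X11 x1 xx st_list_hom by fastforce
        have Esh: "parL Th Es \<in> hom Th ?X (unitS Th)" using X11 x1 xx ef_list_hom by fastforce
        have wh: "w Es \<in> hom Th (unitS Th) W" using Esh s unfolding w_def by simp
        define \<rho> where "\<rho> = seqc Th T (parL Th Ps)"
        have rh: "\<rho> \<in> hom Th (unitS Th) ?Y" using T Psh unfolding \<rho>_def by simp
        have eh: "eps Es \<in> hom Th ?Y (unitS Th)" using e wh unfolding eps_def by simp
        have a1: "seqc Th (seqc Th e (parc Th T (idp Th W))) (parc Th (parL Th Ps) (w Es)) =
              seqc Th e (seqc Th (parc Th T (idp Th W)) (parc Th (parL Th Ps) (w Es)))"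
          using T e Psh wh by (intro sassoc[symmetric]) auto
        have a2: "seqc Th (parc Th T (idp Th W)) (parc Th (parL Th Ps) (w Es)) = parc Th \<rho> (w Es)"
          unfolding \<rho>_def using interchange[of "parL Th Ps" T "w Es" "idp Th W"] T Psh wh by simp
        have a3: "parc Th \<rho> (w Es) = seqc Th (parc Th (idp Th ?Y) (w Es)) \<rho>"
          using slide2[of \<rho> "w Es"] rh wh by simp
        have a4: "seqc Th e (seqc Th (parc Th (idp Th ?Y) (w Es)) \<rho>) = seqc Th (eps Es) \<rho>"
          unfolding eps_def using e wh rh by (intro sassoc) auto
        have b: "prob Th (seqc Th (eps Es) \<rho>) = sum_list (map (\<lambda>(c', Ps', Es'). c' * prob Th (seqc Th (eps Es) (parc Th (parL Th Ps')
           (seqc Th (parL Th Es') \<rho>)))) X2)"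
          using X22[of \<rho> "unitS Th" "eps Es"] rh eh by simp
        have "c * prob Th (seqc Th (seqc Th e (parc Th T (idp Th W))) (parc Th (parL Th Ps) (w Es))) =
              c * prob Th (seqc Th (eps Es) \<rho>)" using a1 a2 a3 a4 by simp
        also have "\<dots> = sum_list (map (\<lambda>x2. k2 x1 x2 T) X2)"
          unfolding b sum_list_const_mult[symmetric]
        proof (intro arg_cong[where f = sum_list] map_cong refl)
          fix x2 assume x2: "x2 \<in> set X2"
          obtain c' Ps' Es' where yy: "x2 = (c', Ps', Es')" by (cases x2) auto
          have Psh': "parL Th Ps' \<in> hom Th (unitS Th) ?Y" using X21 x2 yy st_list_hom by fastforce
          have Esh': "parL Th Es' \<in> hom Th ?Y (unitS Th)" using X21 x2 yy ef_list_hom by fastforce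
          define z where "z = seqc Th (parL Th Es') \<rho>"
          have zh: "z \<in> hom Th (unitS Th) (unitS Th)" using Esh' rh unfolding z_def by simp
          have c1: "parc Th (parL Th Ps') z = seqc Th (parL Th Ps') z"
            using scalar_seq[of z "parL Th Ps'"] zh Psh' by simp
          have c2: "seqc Th (eps Es) (seqc Th (parL Th Ps') z) = seqc Th (seqc Th (eps Es) (parL Th Ps')) z"
            using eh Psh' zh by (intro sassoc) auto
          have c3: "prob Th (seqc Th (seqc Th (eps Es) (parL Th Ps')) z) = prob Th (seqc Th (eps Es) (parL Th Ps')) * prob Th z"
            using prob_mult eh Psh' zh by simp
          show "c * (case x2 of (c', Ps', Es') \<Rightarrow> c' * prob Th (seqc Th (eps Es) (parc Th (parL Th Ps') (seqc Th (parL Th Es') \<rho>)))) =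
                k2 x1 x2 T"
            unfolding yy xx k2_def G_def using c1 c2 c3 by (simp add: z_def \<rho>_def)
        qed
        finally show "(case x1 of (c, Ps, Es) \<Rightarrow> c * prob Th (seqc Th (seqc Th e (parc Th T (idp Th W))) (parc Th (parL Th Ps) (w Es)))) =
            k1 x1 T" unfolding k1_def xx by simp
      qed
      finally show ?thesis .
    qed
    show "lc_val (tpr Th \<tau>) L = lc_val (tpr Th \<tau>) L'"
    proof (rule lc_eq[where k = k1 and ys = X1])
      show "\<forall>x \<in> set L. tpr Th \<tau> (snd x) = sum_list (map (\<lambda>y. k1 y (snd x)) X1)"
        using ok expand unfolding lc_ok_def by auto
      show "\<forall>x \<in> set L'. tpr Th \<tau> (snd x) = sum_list (map (\<lambda>y. k1 y (snd x)) X1)"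
        using ok' expand unfolding lc_ok_def by auto
      show "\<forall>y \<in> set X1. lc_val (k1 y) L = lc_val (k1 y) L'"
      proof
        fix x1 assume x1: "x1 \<in> set X1"
        show "lc_val (k1 x1) L = lc_val (k1 x1) L'"
        proof (rule lc_eq[where k = "k2 x1" and ys = X2])
          show "\<forall>x \<in> set L. k1 x1 (snd x) = sum_list (map (\<lambda>y. k2 x1 y (snd x)) X2)"
            unfolding k1_def by simp
          show "\<forall>x \<in> set L'. k1 x1 (snd x) = sum_list (map (\<lambda>y. k2 x1 y (snd x)) X2)"
            unfolding k1_def by simp
          show "\<forall>y \<in> set X2. lc_val (k2 x1 y) L = lc_val (k2 x1 y) L'"
          proof
            fix x2 assume x2: "x2 \<in> set X2"
            have st: "st_list As (fst (snd x1))" using X11 x1 by blast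
            have ef: "ef_list Bs (snd (snd x2))" using X21 x2 by blast
            have "lc_val (G (snd (snd x2)) (fst (snd x1))) L = lc_val (G (snd (snd x2)) (fst (snd x1))) L'"
              using H st ef unfolding G_def st_list_def ef_list_def by blast
            thus "lc_val (k2 x1 x2) L = lc_val (k2 x1 x2) L'"
              unfolding k2_def using lc_val_scale by metis
          qed
        qed
      qed
    qed
  qed
qed

lemma N_det:
  assumes S: "lin_indep_spanning_states Th A m P" and Ef: "lin_indep_spanning_effects Th A m E"
  shows "det (Nmat Th m P E) \<noteq> 0"
  unfolding Nmat_def
proof (rule KER2)
  fix x assume x: "\<forall>j<m. (\<Sum>i<m. prob Th (seqc Th (E j) (P i)) * x i) = 0"
  have Ph: "\<forall>j<m. P j \<in> hom Th (unitS Th) A" and Pi: "\<forall>c. gpt_eq Th (unitS Th) A (map (\<lambda>j. (c j, P j)) [0..<m]) [] \<longrightarrow> (\<forall>j<m. c j = 0)"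
    using S unfolding lin_indep_spanning_states_def lin_indep_spanning_def by auto
  have Eh: "\<forall>j<m. E j \<in> hom Th A (unitS Th)" and Es: "\<forall>F \<in> hom Th A (unitS Th). \<exists>c. gpt_eq Th A (unitS Th) [(1, F)] (map (\<lambda>j. (c j, E j)) [0..<m])"
    using Ef unfolding lin_indep_spanning_effects_def lin_indep_spanning_def by auto
  have "gpt_eq Th (unitS Th) A (map (\<lambda>i. (x i, P i)) [0..<m]) []"
  proof (rule state_zero)
    show "lc_ok Th (unitS Th) A (map (\<lambda>i. (x i, P i)) [0..<m])" using Ph unfolding lc_ok_def by auto
    show "\<forall>F \<in> hom Th A (unitS Th). lc_val (\<lambda>T. prob Th (seqc Th F T)) (map (\<lambda>i. (x i, P i)) [0..<m]) = 0"
    proof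
      fix F assume F: "F \<in> hom Th A (unitS Th)"
      obtain a where a: "gpt_eq Th A (unitS Th) [(1, F)] (map (\<lambda>j. (a j, E j)) [0..<m])" using Es F by blast
      have "lc_val (\<lambda>T. prob Th (seqc Th F T)) (map (\<lambda>i. (x i, P i)) [0..<m]) =
            (\<Sum>i<m. x i * (\<Sum>j<m. a j * prob Th (seqc Th (E j) (P i))))"
        unfolding lc_val_upt using effect_lin[OF a F Eh] Ph by simp
      also have "\<dots> = (\<Sum>j<m. a j * (\<Sum>i<m. prob Th (seqc Th (E j) (P i)) * x i))"
        by (simp add: sum_distrib_left algebra_simps) (rule sum.swap)
      also have "\<dots> = 0" using x by simp
      finally show "lc_val (\<lambda>T. prob Th (seqc Th F T)) (map (\<lambda>i. (x i, P i)) [0..<m]) = 0" .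
    qed
  qed
  thus "\<forall>i<m. x i = 0" using Pi by blast
qed

lemma N_inv:
  assumes S: "lin_indep_spanning_states Th A m P" and Ef: "lin_indep_spanning_effects Th A m E"
  shows "invertible_mat (Nmat Th m P E)"
proof -
  have C: "Nmat Th m P E \<in> carrier_mat m m" unfolding Nmat_def by simp
  obtain B where "B \<in> carrier_mat m m" "Nmat Th m P E * B = 1\<^sub>m m" "B * Nmat Th m P E = 1\<^sub>m m"
    using INV[OF C N_det[OF S Ef]] by blast
  thus ?thesis using C unfolding invertible_mat_def inverts_mat_def square_mat.simps by auto
qed

lemma D_from_TL:
  assumes TL: "tomographically_local Th"
    and S: "lin_indep_spanning_states Th A m P" and Ef: "lin_indep_spanning_effects Th A m E"
    and M: "M \<in> carrier_mat m m" and NM: "Nmat Th m P E * M = 1\<^sub>m m"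
  shows "gpt_eq Th A A [(1, idp Th A)] (id_expansion Th m M P E)"
proof -
  have Ph: "\<forall>j<m. P j \<in> hom Th (unitS Th) A" and Ps: "\<forall>Q \<in> hom Th (unitS Th) A. \<exists>c. gpt_eq Th (unitS Th) A [(1, Q)] (map (\<lambda>j. (c j, P j)) [0..<m])"
    using S unfolding lin_indep_spanning_states_def lin_indep_spanning_def by auto
  have Eh: "\<forall>j<m. E j \<in> hom Th A (unitS Th)" and Es: "\<forall>F \<in> hom Th A (unitS Th). \<exists>c. gpt_eq Th A (unitS Th) [(1, F)] (map (\<lambda>j. (c j, E j)) [0..<m])"
    using Ef unfolding lin_indep_spanning_effects_def lin_indep_spanning_def by auto
  define n where "n = (\<lambda>j i. prob Th (seqc Th (E j) (P i)))"
  define mm where "mm = (\<lambda>j i. M $$ (j, i))"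
  have id: "(\<Sum>j<m. n l j * mm j i) = (if l = i then 1 else 0)" if "l < m" "i < m" for l i
  proof -
    have "(Nmat Th m P E * M) $$ (l, i) = (\<Sum>j<m. n l j * mm j i)"
      using that M unfolding Nmat_def n_def mm_def
      by (simp add: scalar_prod_def row_def col_def atLeast0LessThan)
    thus ?thesis using NM that by simp
  qed
  have tl: "tensL Th [A] = A" by simp
  have okL: "lc_ok Th (tensL Th [A]) (tensL Th [A]) [(1, idp Th A)]" unfolding lc_ok_def by simp
  have okL': "lc_ok Th (tensL Th [A]) (tensL Th [A]) (id_expansion Th m M P E)"
    unfolding lc_ok_def id_expansion_def using Ph Eh by auto
  have H: "lc_val (\<lambda>T. prob Th (seqc Th (parL Th Fs) (seqc Th T (parL Th Qs)))) [(1, idp Th A)] =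
           lc_val (\<lambda>T. prob Th (seqc Th (parL Th Fs) (seqc Th T (parL Th Qs)))) (id_expansion Th m M P E)"
    if Qs: "length Qs = length [A]" "\<forall>k < length [A]. Qs ! k \<in> hom Th (unitS Th) ([A] ! k)"
    and Fs: "length Fs = length [A]" "\<forall>k < length [A]. Fs ! k \<in> hom Th ([A] ! k) (unitS Th)" for Qs Fs
  proof -
    obtain Q where Qd: "Qs = [Q]" using Qs(1) by (cases Qs) auto
    obtain F where Fd: "Fs = [F]" using Fs(1) by (cases Fs) auto
    have Q: "Q \<in> hom Th (unitS Th) A" using Qs(2) Qd by auto
    have F: "F \<in> hom Th A (unitS Th)" using Fs(2) Fd by auto
    obtain b where b: "gpt_eq Th (unitS Th) A [(1, Q)] (map (\<lambda>j. (b j, P j)) [0..<m])" using Ps Q by blast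
    obtain a where a: "gpt_eq Th A (unitS Th) [(1, F)] (map (\<lambda>j. (a j, E j)) [0..<m])" using Es F by blast
    have FP: "prob Th (seqc Th F (P j)) = (\<Sum>l<m. a l * n l j)" if "j < m" for j
      using effect_lin[OF a F Eh] Ph that unfolding n_def by simp
    have EQ: "prob Th (seqc Th (E i) Q) = (\<Sum>k<m. b k * n i k)" if "i < m" for i
      using state_lin[OF b Q Ph] Eh that unfolding n_def by simp
    have FQ: "prob Th (seqc Th F Q) = (\<Sum>l<m. a l * (\<Sum>k<m. b k * n l k))"
      using effect_lin[OF a F Eh Q] EQ by simp
    have sc: "prob Th (seqc Th F (seqc Th (seqc Th (P j) (E i)) Q)) = prob Th (seqc Th F (P j)) * prob Th (seqc Th (E i) Q)"
      if "j < m" "i < m" for j i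
    proof -
      have "seqc Th F (seqc Th (seqc Th (P j) (E i)) Q) = seqc Th (seqc Th F (P j)) (seqc Th (E i) Q)"
        using that Ph Eh F Q by (simp add: sassoc)
      thus ?thesis using prob_mult that Ph Eh F Q by simp
    qed
    have "lc_val (\<lambda>T. prob Th (seqc Th F (seqc Th T Q))) (id_expansion Th m M P E) =
      (\<Sum>j<m. \<Sum>i<m. mm j i * (\<Sum>l<m. a l * n l j) * (\<Sum>k<m. b k * n i k))"
      unfolding lc_val_expansion mm_def using sc FP EQ by (simp add: mult.assoc)
    also have "\<dots> = prob Th (seqc Th F Q)" using ALG[of m n mm a b] id FQ by simp
    finally show ?thesis using Q F Qd Fd by simp
  qed
  have "gpt_eq Th (tensL Th [A]) (tensL Th [A]) [(1, idp Th A)] (id_expansion Th m M P E)"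
    using TL okL okL' H unfolding tomographically_local_def by blast
  thus ?thesis by simp
qed

end

theorem lemma2:
  fixes Th :: "('s, 'p) optheory"
  assumes "operational_theory Th"
  shows "tomographically_local Th \<longleftrightarrow>
    (\<forall>A m Ps Es. lin_indep_spanning_states Th A m Ps \<longrightarrow> lin_indep_spanning_effects Th A m Es \<longrightarrow>
       invertible_mat (Nmat Th m Ps Es) \<and>
       (\<forall>M \<in> carrier_mat m m. M * Nmat Th m Ps Es = 1\<^sub>m m \<and> Nmat Th m Ps Es * M = 1\<^sub>m m \<longrightarrow>
          gpt_eq Th A A [(1, idp Th A)] (id_expansion Th m M Ps Es)))"
proof -
  interpret OT Th by unfold_locales (rule assms)
  show ?thesis
  proof
    assume TL: "tomographically_local Th"
    show "\<forall>A m Ps Es. lin_indep_spanning_states Th A m Ps \<longrightarrow> lin_indep_spanning_effects Th A m Es \<longrightarrow>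
       invertible_mat (Nmat Th m Ps Es) \<and>
       (\<forall>M \<in> carrier_mat m m. M * Nmat Th m Ps Es = 1\<^sub>m m \<and> Nmat Th m Ps Es * M = 1\<^sub>m m \<longrightarrow>
          gpt_eq Th A A [(1, idp Th A)] (id_expansion Th m M Ps Es))"
      using N_inv D_from_TL[OF TL] by blast
  next
    assume R: "\<forall>A m Ps Es. lin_indep_spanning_states Th A m Ps \<longrightarrow> lin_indep_spanning_effects Th A m Es \<longrightarrow>
       invertible_mat (Nmat Th m Ps Es) \<and>
       (\<forall>M \<in> carrier_mat m m. M * Nmat Th m Ps Es = 1\<^sub>m m \<and> Nmat Th m Ps Es * M = 1\<^sub>m m \<longrightarrow>
          gpt_eq Th A A [(1, idp Th A)] (id_expansion Th m M Ps Es))"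
    have "Dsys A" for A
    proof -
      obtain m P E where S: "lin_indep_spanning_states Th A m P" and Ef: "lin_indep_spanning_effects Th A m E"
        using bases_exist by blast
      have C: "Nmat Th m P E \<in> carrier_mat m m" unfolding Nmat_def by simp
      obtain B where B: "B \<in> carrier_mat m m" "Nmat Th m P E * B = 1\<^sub>m m" "B * Nmat Th m P E = 1\<^sub>m m"
        using INV[OF C N_det[OF S Ef]] by blast
      have g: "gpt_eq Th A A [(1, idp Th A)] (id_expansion Th m B P E)" using R S Ef B by blast
      have "\<forall>j<m. P j \<in> hom Th (unitS Th) A" using S unfolding lin_indep_spanning_states_def lin_indep_spanning_def by blast
      moreover have "\<forall>j<m. E j \<in> hom Th A (unitS Th)" using Ef unfolding lin_indep_spanning_effects_def lin_indep_spanning_def by blast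
      ultimately show ?thesis unfolding Dsys_def using g by blast
    qed
    thus "tomographically_local Th" using TL_from_D by blast
  qed
qed
end
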